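(* For all positive integers $h$ and $k$, \[ n^{\sharp}_h(k)=m^{\sharp}_h(k). \]
   Context: For integers $a<b$, $[a,b]=\{j\in\mathbf{Z}: a\le j\le b\}$ is an interval of integers. $hA=\{a_1+\cdots+a_h: a_i\in A\}$ (summands not necessarily distinct). For a nonempty finite $A\subseteq\mathbf{Z}$, $\ell^{\sharp}_h(A)$ is the largest integer $n\ge1$ with $[c,c+n]\subseteq hA$ for some $c\in\mathbf{Z}$ (undefined if $hA$ contains no interval). With $\mathcal{A}_X(k)=\{A\subseteq X:|A|=k\}$ and $\mathbf{N}_0=\{0,1,2,\ldots\}$: $n^{\sharp}_h(k)=\max\{\ell^{\sharp}_h(A):A\in\mathcal{A}_{\mathbf{N}_0}(k)\}$ and $m^{\sharp}_h(k)=\max\{\ell^{\sharp}_h(A):A\in\mathcal{A}_{\mathbf{Z}}(k)\}$, maxima taken over sets for which $\ell^{\sharp}_h(A)$ is defined. *)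

theory Defs
  imports Main
begin

fun sumset :: "nat \<Rightarrow> int set \<Rightarrow> int set" where
  "sumset 0 A = {0}"
| "sumset (Suc h) A = {a + s | a s. a \<in> A \<and> s \<in> sumset h A}"

definition interval_lengths :: "nat \<Rightarrow> int set \<Rightarrow> nat set" where
  "interval_lengths h A = {n. n \<ge> 1 \<and> (\<exists>c::int. {c..c + int n} \<subseteq> sumset h A)}"

definition has_interval :: "nat \<Rightarrow> int set \<Rightarrow> bool" where
  "has_interval h A \<longleftrightarrow> interval_lengths h A \<noteq> {}"

text \<open>ell^sharp_h(A): only meaningful when has_interval h A.\<close>
definition ell_sharp :: "nat \<Rightarrow> int set \<Rightarrow> nat" where
  "ell_sharp h A = Max (interval_lengths h A)"

definition n_sharp :: "nat \<Rightarrow> nat \<Rightarrow> nat" where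
  "n_sharp h k = Max {ell_sharp h A | A. (\<forall>a\<in>A. a \<ge> 0) \<and> finite A \<and> card A = k \<and> has_interval h A}"

definition m_sharp :: "nat \<Rightarrow> nat \<Rightarrow> nat" where
  "m_sharp h k = Max {ell_sharp h A | A. finite A \<and> card A = k \<and> has_interval h A}"

end

theory Submission
  imports Defs
begin

lemma sumset_shift:
  "sumset h ((\<lambda>x. x + t) ` A) = (\<lambda>x. x + int h * t) ` sumset h A"
proof (induction h)
  case 0
  then show ?case by simp
next
  case (Suc h)
  show ?case
  proof (rule set_eqI, rule iffI)
    fix x assume "x \<in> sumset (Suc h) ((\<lambda>x. x + t) ` A)"
    then obtain a s where "a \<in> A" "s \<in> sumset h A" "x = (a + t) + (s + int h * t)"
      using Suc.IH by auto
    then show "x \<in> (\<lambda>x. x + int (Suc h) * t) ` sumset (Suc h) A"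
      by (auto simp: algebra_simps intro!: image_eqI[where x="a+s"])
  next
    fix x assume "x \<in> (\<lambda>x. x + int (Suc h) * t) ` sumset (Suc h) A"
    then obtain a s where as: "a \<in> A" "s \<in> sumset h A" "x = (a + s) + int (Suc h) * t"
      by auto
    have "a + t \<in> (\<lambda>x. x + t) ` A" using as by auto
    moreover have "s + int h * t \<in> sumset h ((\<lambda>x. x + t) ` A)" using as Suc.IH by auto
    moreover have "x = (a + t) + (s + int h * t)" using as by (simp add: algebra_simps)
    ultimately show "x \<in> sumset (Suc h) ((\<lambda>x. x + t) ` A)" by auto
  qed
qed

lemma interval_shift:
  "({c..c + n} \<subseteq> (\<lambda>x::int. x + d) ` S) \<longleftrightarrow> ({c - d..c - d + n} \<subseteq> S)"
proof
  assume H: "{c..c + n} \<subseteq> (\<lambda>x::int. x + d) ` S"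
  show "{c - d..c - d + n} \<subseteq> S"
  proof
    fix x assume "x \<in> {c - d..c - d + n}"
    then have "x + d \<in> {c..c+n}" by auto
    with H obtain y where "y \<in> S" "x + d = y + d" by auto
    then show "x \<in> S" by simp
  qed
next
  assume H: "{c - d..c - d + n} \<subseteq> S"
  show "{c..c + n} \<subseteq> (\<lambda>x::int. x + d) ` S"
  proof
    fix x assume "x \<in> {c..c + n}"
    then have "x - d \<in> S" using H by auto
    then show "x \<in> (\<lambda>x::int. x + d) ` S" by (intro image_eqI[where x="x-d"]) auto
  qed
qed

lemma interval_lengths_shift:
  "interval_lengths h ((\<lambda>x. x + t) ` A) = interval_lengths h A"
proof -
  have "(\<exists>c. {c..c + int n} \<subseteq> sumset h ((\<lambda>x. x + t) ` A)) \<longleftrightarrow>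
        (\<exists>c. {c..c + int n} \<subseteq> sumset h A)" for n
  proof
    assume "\<exists>c. {c..c + int n} \<subseteq> sumset h ((\<lambda>x. x + t) ` A)"
    then obtain c where "{c..c + int n} \<subseteq> (\<lambda>x. x + int h * t) ` sumset h A"
      by (auto simp: sumset_shift)
    then have "{c - int h * t..c - int h * t + int n} \<subseteq> sumset h A"
      using interval_shift by blast
    then show "\<exists>c. {c..c + int n} \<subseteq> sumset h A" by blast
  next
    assume "\<exists>c. {c..c + int n} \<subseteq> sumset h A"
    then obtain c where c: "{c..c + int n} \<subseteq> sumset h A" by blast
    have "{(c + int h * t) - int h * t..(c + int h * t) - int h * t + int n} \<subseteq> sumset h A"
      using c by simp
    then have "{c + int h * t..c + int h * t + int n} \<subseteq> (\<lambda>x. x + int h * t) ` sumset h A"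
      using interval_shift by blast
    then show "\<exists>c. {c..c + int n} \<subseteq> sumset h ((\<lambda>x. x + t) ` A)"
      by (auto simp: sumset_shift)
  qed
  then show ?thesis unfolding interval_lengths_def by auto
qed

theorem mainTheorem6:
  fixes h k :: nat
  assumes "h \<ge> 1" and "k \<ge> 1"
  shows "n_sharp h k = m_sharp h k"
proof -
  have "{ell_sharp h A | A. (\<forall>a\<in>A. a \<ge> 0) \<and> finite A \<and> card A = k \<and> has_interval h A}
      = {ell_sharp h A | A. finite A \<and> card A = k \<and> has_interval h A}"
  proof (rule set_eqI, rule iffI)
    fix x assume "x \<in> {ell_sharp h A | A. (\<forall>a\<in>A. a \<ge> 0) \<and> finite A \<and> card A = k \<and> has_interval h A}"
    then show "x \<in> {ell_sharp h A | A. finite A \<and> card A = k \<and> has_interval h A}" by blast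
  next
    fix x assume "x \<in> {ell_sharp h A | A. finite A \<and> card A = k \<and> has_interval h A}"
    then obtain A where A: "x = ell_sharp h A" "finite A" "card A = k" "has_interval h A" by blast
    define B where "B = (\<lambda>x. x + (- Min A)) ` A"
    have ne: "A \<noteq> {}" using A assms by auto
    have "\<forall>b\<in>B. b \<ge> 0" unfolding B_def using A(2) ne Min_le by fastforce
    moreover have "finite B" unfolding B_def using A by auto
    moreover have "card B = k" unfolding B_def using A by (simp add: card_image)
    moreover have IL: "interval_lengths h B = interval_lengths h A"
      unfolding B_def by (rule interval_lengths_shift)
    moreover have "has_interval h B" using IL A(4) by (simp add: has_interval_def)
    moreover have "ell_sharp h B = x" using IL A(1) by (simp add: ell_sharp_def)
    ultimately show "x \<in> {ell_sharp h A | A. (\<forall>a\<in>A. a \<ge> 0) \<and> finite A \<and> card A = k \<and> has_interval h A}"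
      by blast
  qed
  then show ?thesis unfolding n_sharp_def m_sharp_def by simp
qed

end
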